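(* Let $V$ be a finite-dimensional complex $S_d$-module, and equip $\bigoplus_{\underline{d}}(V^{S_{\underline{d}}})^*$ with the $\mathrm{GL}(\mathbb{E})$-action obtained by applying the Schur--Weyl construction to $V^*$, via the identifications described in the context. Let $a\in[n-1]$ and $\underline{d}=(d_1,\dots,d_n)\in\mathcal{P}^{++}_{n,d}$. If $d_{a+1}\ge1$, then $E_a:(V^{S_{\underline{d}}})^*\to(V^{S_{\tilde e_a\underline{d}}})^*$ is the adjoint of the map $$\tfrac{d_{a+1}}{d_a+1}F_a:V^{S_{\tilde e_a\underline{d}}}\to V^{S_{\underline{d}}}.$$ If $d_a\ge1$, then $F_a:(V^{S_{\underline{d}}})^*\to(V^{S_{\tilde f_a\underline{d}}})^*$ is the adjoint of the map $$\tfrac{d_a}{d_{a+1}+1}E_a:V^{S_{\tilde f_a\underline{d}}}\to V^{S_{\underline{d}}}.$$ Here $E_a,F_a$ on the right are the Chevalley generators for $V$.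
   Context: Fix $n,d\ge1$. Let $\mathcal{P}_{n,d}$ be the set of compositions $\underline{d}=(d_1,\dots,d_n)$ of $d$ with $d_i\ge0$, and let $\mathcal{P}^{++}_{n,d}$ be those with $d_1\ge\dots\ge d_n$. Let $S_{\underline{d}}=S_{d_1}\times\dots\times S_{d_n}\subseteq S_d$ be the block subgroup. The composition $\tilde e_a\underline{d}$ replaces $(d_a,d_{a+1})$ by $(d_a+1,d_{a+1}-1)$, and $\tilde f_a\underline{d}$ replaces them by $(d_a-1,d_{a+1}+1)$. Let $\mathbb{E}=\mathbb{C}^n$ with basis $\theta_i$ and $\theta_{\underline{d}}=\theta_1^{\otimes d_1}\otimes\dots\otimes\theta_n^{\otimes d_n}$. For any $S_d$-module $M$, transport the $\mathrm{GL}(\mathbb{E})$-action on $(M\otimes\mathbb{E}^{\otimes d})^{S_d}$ to $\bigoplus_{\underline{d}}M^{S_{\underline{d}}}$ via $m\mapsto\frac{1}{\#S_d}\sum_{x\in S_d}x(m)\otimes x(\theta_{\underline{d}})$ on $M^{S_{\underline{d}}}$. The Chevalley generators are $E_a\theta_{a+1}=\theta_a$, $F_a\theta_a=\theta_{a+1}$, and both kill the other basis vectors. For $M=V$ this gives operators $E_a:V^{S_{\underline{d}}}\to V^{S_{\tilde e_a\underline{d}}}$ and $F_a:V^{S_{\underline{d}}}\to V^{S_{\tilde f_a\underline{d}}}$. Applying this construction to $M=V^*$, the invariants $(V^* )^{S_{\underline{d}}}$ are identified with $(V_{S_{\underline{d}}})^*$, the dual of the coinvariants. This is further identified with $(V^{S_{\underline{d}}})^*$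 using the isomorphism $V_{S_{\underline{d}}}\to V^{S_{\underline{d}}}$, $[v]\mapsto\frac{1}{\#S_{\underline{d}}}\sum_{g\in S_{\underline{d}}}gv$. *)

theory Defs
  imports "HOL-Analysis.Analysis" "HOL-Library.Function_Algebras"
begin

text \<open>Conventions. Positions of tensor factors are 1..d, letters (basis vectors theta_i of E)
are 1..n. A composition dd is a function nat => nat read on 1..n. A basis tensor
theta_{w 1} (x) ... (x) theta_{w d} of E^{(x) d} is encoded by a word w : nat => nat with values
in 1..n on 1..d and 0 elsewhere; an element of M (x) E^{(x) d} is a function from words to M.\<close>

definition Sd :: "nat \<Rightarrow> (nat \<Rightarrow> nat) set" where
  "Sd d = {x. x permutes {1..d}}"

text \<open>The word of theta_dd = theta_1^{d_1} (x) ... (x) theta_n^{d_n}.\<close>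
definition wordof :: "nat \<Rightarrow> (nat \<Rightarrow> nat) \<Rightarrow> nat \<Rightarrow> nat" where
  "wordof d dd i = (if i \<in> {1..d} then (LEAST j. i \<le> (\<Sum>k=1..j. dd k)) else 0)"

text \<open>Block (Young) subgroup S_dd: permutations preserving the blocks of dd.\<close>
definition block :: "nat \<Rightarrow> (nat \<Rightarrow> nat) \<Rightarrow> (nat \<Rightarrow> nat) set" where
  "block d dd = {x \<in> Sd d. wordof d dd \<circ> x = wordof d dd}"

definition words :: "nat \<Rightarrow> nat \<Rightarrow> (nat \<Rightarrow> nat) set" where
  "words n d = {u. (\<forall>i\<in>{1..d}. u i \<in> {1..n}) \<and> (\<forall>i. i \<notin> {1..d} \<longrightarrow> u i = 0)}"

definition invariants :: "((nat \<Rightarrow> nat) \<Rightarrow> 'm \<Rightarrow> 'm) \<Rightarrow> (nat \<Rightarrow> nat) set \<Rightarrow> 'm set" where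
  "invariants \<rho> H = {m. \<forall>h\<in>H. \<rho> h m = m}"

definition e_comp :: "nat \<Rightarrow> (nat \<Rightarrow> nat) \<Rightarrow> nat \<Rightarrow> nat" where
  "e_comp a dd = dd(a := dd a + 1, Suc a := dd (Suc a) - 1)"

definition f_comp :: "nat \<Rightarrow> (nat \<Rightarrow> nat) \<Rightarrow> nat \<Rightarrow> nat" where
  "f_comp a dd = dd(a := dd a - 1, Suc a := dd (Suc a) + 1)"

text \<open>The embedding M^{S_dd} -> (M (x) E^{(x) d})^{S_d},
  m |-> 1/d! * sum_x x(m) (x) x(theta_dd), where x acts on words by w |-> w o x^{-1}.\<close>
definition SW_embed :: "(complex \<Rightarrow> 'm \<Rightarrow> 'm) \<Rightarrow> ((nat \<Rightarrow> nat) \<Rightarrow> 'm \<Rightarrow> 'm) \<Rightarrow> nat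
    \<Rightarrow> (nat \<Rightarrow> nat) \<Rightarrow> 'm \<Rightarrow> (nat \<Rightarrow> nat) \<Rightarrow> 'm::comm_monoid_add" where
  "SW_embed sc \<rho> d dd m = (\<lambda>u. sc (inverse (fact d))
      (\<Sum>x\<in>{x\<in>Sd d. wordof d dd \<circ> inv x = u}. \<rho> x m))"

text \<open>Action of the Chevalley generators E_a (theta_{a+1} |-> theta_a) and
  F_a (theta_a |-> theta_{a+1}) on M (x) E^{(x) d} (acting on the tensor factors as a derivation).\<close>
definition tensE :: "nat \<Rightarrow> nat \<Rightarrow> ((nat \<Rightarrow> nat) \<Rightarrow> 'm) \<Rightarrow> (nat \<Rightarrow> nat) \<Rightarrow> 'm::comm_monoid_add" where
  "tensE d a T u = (\<Sum>i\<in>{i\<in>{1..d}. u i = a}. T (u(i := Suc a)))"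

definition tensF :: "nat \<Rightarrow> nat \<Rightarrow> ((nat \<Rightarrow> nat) \<Rightarrow> 'm) \<Rightarrow> (nat \<Rightarrow> nat) \<Rightarrow> 'm::comm_monoid_add" where
  "tensF d a T u = (\<Sum>i\<in>{i\<in>{1..d}. u i = Suc a}. T (u(i := a)))"

text \<open>Transported operators E_a : M^{S_dd} -> M^{S_{e_a dd}} and F_a : M^{S_dd} -> M^{S_{f_a dd}}.\<close>
definition SW_E :: "(complex \<Rightarrow> 'm \<Rightarrow> 'm) \<Rightarrow> ((nat \<Rightarrow> nat) \<Rightarrow> 'm \<Rightarrow> 'm) \<Rightarrow> nat \<Rightarrow> nat \<Rightarrow> nat
    \<Rightarrow> (nat \<Rightarrow> nat) \<Rightarrow> 'm \<Rightarrow> 'm::comm_monoid_add" where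
  "SW_E sc \<rho> n d a dd m = (THE m'. m' \<in> invariants \<rho> (block d (e_comp a dd)) \<and>
     (\<forall>u\<in>words n d. SW_embed sc \<rho> d (e_comp a dd) m' u = tensE d a (SW_embed sc \<rho> d dd m) u))"

definition SW_F :: "(complex \<Rightarrow> 'm \<Rightarrow> 'm) \<Rightarrow> ((nat \<Rightarrow> nat) \<Rightarrow> 'm \<Rightarrow> 'm) \<Rightarrow> nat \<Rightarrow> nat \<Rightarrow> nat
    \<Rightarrow> (nat \<Rightarrow> nat) \<Rightarrow> 'm \<Rightarrow> 'm::comm_monoid_add" where
  "SW_F sc \<rho> n d a dd m = (THE m'. m' \<in> invariants \<rho> (block d (f_comp a dd)) \<and>
     (\<forall>u\<in>words n d. SW_embed sc \<rho> d (f_comp a dd) m' u = tensF d a (SW_embed sc \<rho> d dd m) u))"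

text \<open>Dual module V^*: (x f)(v) = f(x^{-1} v), scalars act pointwise.\<close>
definition dual_act :: "((nat \<Rightarrow> nat) \<Rightarrow> 'v \<Rightarrow> 'v) \<Rightarrow> (nat \<Rightarrow> nat) \<Rightarrow> ('v \<Rightarrow> complex) \<Rightarrow> 'v \<Rightarrow> complex" where
  "dual_act \<rho> x f = f \<circ> \<rho> (inv x)"

definition dual_scale :: "complex \<Rightarrow> ('v \<Rightarrow> complex) \<Rightarrow> 'v \<Rightarrow> complex" where
  "dual_scale c f = (\<lambda>v. c * f v)"

text \<open>Averaging V -> V^{S_dd}; (V^{S_dd})^* is identified with (V^*)^{S_dd} via phi |-> phi o avg.\<close>
definition avg :: "((nat \<Rightarrow> nat) \<Rightarrow> complex^'k \<Rightarrow> complex^'k) \<Rightarrow> nat \<Rightarrow> (nat \<Rightarrow> nat) \<Rightarrow> complex^'k \<Rightarrow> complex^'k" where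
  "avg \<rho> d dd v = inverse (of_nat (card (block d dd))) *s (\<Sum>g\<in>block d dd. \<rho> g v)"

end

theory Submission imports Defs begin

abbreviation tr :: "nat \<Rightarrow> nat \<Rightarrow> nat \<Rightarrow> nat" where "tr \<equiv> Transposition.transpose"

lemma inv_tr: "inv (tr a b) = tr a b"
  by (simp add: transpose_involutory inv_unique_comp transpose_comp_involutory)

lemma Sd_inv: "x \<in> Sd d \<Longrightarrow> inv x \<in> Sd d"
  by (simp add: Sd_def permutes_inv)
lemma Sd_comp: "x \<in> Sd d \<Longrightarrow> y \<in> Sd d \<Longrightarrow> x \<circ> y \<in> Sd d"
  by (simp add: Sd_def permutes_compose)
lemma Sd_id: "id \<in> Sd d"
  by (simp add: Sd_def permutes_id)
lemma Sd_finite: "finite (Sd d)"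
  unfolding Sd_def using finite_permutations[of "{1..d}"] by simp
lemma Sd_tr: "p \<in> {1..d} \<Longrightarrow> j \<in> {1..d} \<Longrightarrow> tr p j \<in> Sd d"
  by (simp add: Sd_def permutes_swap_id)
lemma Sd_bij: "x \<in> Sd d \<Longrightarrow> bij x"
  by (simp add: Sd_def permutes_bij)
lemma Sd_inv_o: "x \<in> Sd d \<Longrightarrow> x \<circ> inv x = id" "x \<in> Sd d \<Longrightarrow> inv x \<circ> x = id"
  by (auto simp: Sd_def permutes_inv_o)
lemma Sd_inv_app: "x \<in> Sd d \<Longrightarrow> x (inv x i) = i" "x \<in> Sd d \<Longrightarrow> inv x (x i) = i"
  by (auto simp: Sd_def permutes_inverses)
lemma Sd_inv_inv: "x \<in> Sd d \<Longrightarrow> inv (inv x) = x"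
  by (simp add: Sd_bij inv_inv_eq)
lemma Sd_mem: "x \<in> Sd d \<Longrightarrow> (x i \<in> {1..d}) = (i \<in> {1..d})"
  unfolding Sd_def mem_Collect_eq by (rule permutes_in_image)

lemma orbit_swap:
  assumes "u2 = u(q := \<beta>)" "u q = \<alpha>" "u j = \<alpha>"
  shows "u2 \<circ> tr q j = u(j := \<beta>)"
  using assms by (auto simp: fun_eq_iff Transposition.transpose_def)

lemma upd_comp:
  assumes "x \<in> Sd d"
  shows "(u \<circ> inv x)(i := s) = u(inv x i := s) \<circ> inv x"
  using assms by (auto simp: fun_eq_iff Sd_inv_app permutes_inv_eq Sd_def)

lemma swap_pair:
  assumes x: "x \<in> Sd d" and i: "i \<in> {1..d}" and "w2 i = t" and e: "w \<circ> inv x = w2(i := s)"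
  shows "inv x i \<in> {1..d} \<and> w (inv x i) = s \<and> inv x \<in> Sd d \<and> w2 \<circ> inv (inv x) = w(inv x i := t)"
proof (intro conjI)
  show "inv x i \<in> {1..d}" using Sd_mem[OF Sd_inv[OF x]] i by blast
  show "w (inv x i) = s" using fun_cong[OF e, of i] by simp
  show "inv x \<in> Sd d" using Sd_inv[OF x] .
  show "w2 \<circ> inv (inv x) = w(inv x i := t)"
  proof
    fix k
    show "(w2 \<circ> inv (inv x)) k = (w(inv x i := t)) k"
    proof (cases "k = inv x i")
      case True
      have "(w2 \<circ> inv (inv x)) k = w2 (x (inv x i))" unfolding Sd_inv_inv[OF x] True by simp
      also have "\<dots> = t" unfolding Sd_inv_app(1)[OF x] by fact
      finally show ?thesis using True by simp
    next
      case False
      have xk: "x k \<noteq> i"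
      proof
        assume "x k = i"
        then have "inv x (x k) = inv x i" by simp
        then show False using False Sd_inv_app(2)[OF x, of k] by simp
      qed
      have "(w2 \<circ> inv (inv x)) k = w2 (x k)" unfolding Sd_inv_inv[OF x] by simp
      also have "\<dots> = (w2(i := s)) (x k)" using xk by simp
      also have "\<dots> = w (inv x (x k))" using fun_cong[OF e, of "x k"] by simp
      also have "\<dots> = w k" unfolding Sd_inv_app(2)[OF x] ..
      finally show ?thesis using False by simp
    qed
  qed
qed

definition sig :: "nat \<Rightarrow> (nat \<Rightarrow> nat) \<Rightarrow> (nat \<Rightarrow> nat) \<Rightarrow> nat \<Rightarrow> nat \<Rightarrow> (nat \<times> (nat \<Rightarrow> nat)) set" where
  "sig d w w2 t s = (SIGMA i:{i\<in>{1..d}. w2 i = t}. {x\<in>Sd d. w \<circ> inv x = w2(i := s)})"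

lemma sig_map:
  assumes "(i, x) \<in> sig d w w2 t s"
  shows "(inv x i, inv x) \<in> sig d w2 w s t" "inv (inv x) (inv x i) = i" "inv (inv x) = x"
proof -
  have a: "x \<in> Sd d" "i \<in> {1..d}" "w2 i = t" "w \<circ> inv x = w2(i := s)"
    using assms unfolding sig_def by auto
  note sp = swap_pair[OF a]
  show "(inv x i, inv x) \<in> sig d w2 w s t" using sp unfolding sig_def by auto
  show "inv (inv x) = x" using Sd_inv_inv[OF a(1)] .
  then show "inv (inv x) (inv x i) = i" using Sd_inv_app[OF a(1)] by simp
qed

lemma sig_map':
  assumes "a \<in> sig d w w2 t s"
  shows "(case a of (i,x) \<Rightarrow> (inv x i, inv x)) \<in> sig d w2 w s t"
    "(case (case a of (i,x) \<Rightarrow> (inv x i, inv x)) of (j,y) \<Rightarrow> (inv y j, inv y)) = a"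
proof -
  obtain i x where a: "a = (i, x)" by (cases a)
  show "(case a of (i,x) \<Rightarrow> (inv x i, inv x)) \<in> sig d w2 w s t"
    using sig_map(1)[of i x] assms a by simp
  show "(case (case a of (i,x) \<Rightarrow> (inv x i, inv x)) of (j,y) \<Rightarrow> (inv y j, inv y)) = a"
    using sig_map(2,3)[of i x] assms a by simp
qed

lemma double_sum_swap:
  fixes g :: "(nat \<Rightarrow> nat) \<Rightarrow> 'a::comm_monoid_add" and w wv :: "nat \<Rightarrow> nat" and s t :: nat
  shows "(\<Sum>i\<in>{i\<in>{1..d}. wv i = t}. \<Sum>x\<in>{x\<in>Sd d. w \<circ> inv x = wv(i := s)}. g (inv x))
       = (\<Sum>j\<in>{j\<in>{1..d}. w j = s}. \<Sum>y\<in>{y\<in>Sd d. wv \<circ> inv y = w(j := t)}. g y)"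
proof -
  have f1: "finite {i\<in>{1..d}. wv i = t}" "finite {j\<in>{1..d}. w j = s}" by auto
  have f2: "\<And>P. finite {x\<in>Sd d. P x}" using Sd_finite by auto
  have L: "(\<Sum>i\<in>{i\<in>{1..d}. wv i = t}. \<Sum>x\<in>{x\<in>Sd d. w \<circ> inv x = wv(i := s)}. g (inv x))
     = (\<Sum>(i,x)\<in>sig d w wv t s. g (inv x))"
    unfolding sig_def by (rule sum.Sigma) (use f1 f2 in auto)
  have R: "(\<Sum>j\<in>{j\<in>{1..d}. w j = s}. \<Sum>y\<in>{y\<in>Sd d. wv \<circ> inv y = w(j := t)}. g y)
     = (\<Sum>(j,y)\<in>sig d wv w s t. g y)"
    unfolding sig_def by (rule sum.Sigma) (use f1 f2 in auto)
  show ?thesis unfolding L R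
    apply (rule sum.reindex_bij_witness[where j = "\<lambda>(i,x). (inv x i, inv x)" and i = "\<lambda>(j,y). (inv y j, inv y)"])
    subgoal for a using sig_map'(2)[of a] by blast
    subgoal for a using sig_map'(1)[of a] by blast
    subgoal for b using sig_map'(2)[of b] by blast
    subgoal for b using sig_map'(1)[of b] by blast
    subgoal for a by (cases a) simp
    done
qed

lemma coset_card:
  assumes x0: "x0 \<in> Sd d" and v: "w \<circ> inv x0 = v"
  shows "card {x\<in>Sd d. w \<circ> inv x = v} = card {x\<in>Sd d. w \<circ> x = w}"
proof -
  have "bij_betw (\<lambda>s. x0 \<circ> s) {x\<in>Sd d. w \<circ> x = w} {x\<in>Sd d. w \<circ> inv x = v}"
  proof (rule bij_betw_byWitness[where f' = "\<lambda>x. inv x0 \<circ> x"])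
    show "\<forall>a\<in>{x \<in> Sd d. w \<circ> x = w}. inv x0 \<circ> (x0 \<circ> a) = a"
      using Sd_inv_o(2)[OF x0] by (simp only: o_assoc id_comp) blast
    show "\<forall>a'\<in>{x \<in> Sd d. w \<circ> inv x = v}. x0 \<circ> (inv x0 \<circ> a') = a'"
      using Sd_inv_o(1)[OF x0] by (simp only: o_assoc id_comp) blast
    show "(\<circ>) x0 ` {x \<in> Sd d. w \<circ> x = w} \<subseteq> {x \<in> Sd d. w \<circ> inv x = v}"
    proof (rule image_subsetI)
      fix s assume "s \<in> {x \<in> Sd d. w \<circ> x = w}"
      then have s: "s \<in> Sd d" "w \<circ> s = w" by auto
      have "w \<circ> inv s = (w \<circ> s) \<circ> inv s" using s(2) by simp
      also have "\<dots> = w \<circ> (s \<circ> inv s)" by (simp only: comp_assoc)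
      also have "\<dots> = w" using Sd_inv_o(1)[OF s(1)] by simp
      finally have ws: "w \<circ> inv s = w" .
      have ix: "inv (x0 \<circ> s) = inv s \<circ> inv x0" using Sd_bij s x0 o_inv_distrib by blast
      have "w \<circ> inv (x0 \<circ> s) = (w \<circ> inv s) \<circ> inv x0" unfolding ix by (simp only: comp_assoc)
      also have "\<dots> = v" unfolding ws using v .
      finally have "x0 \<circ> s \<in> Sd d \<and> w \<circ> inv (x0 \<circ> s) = v"
        using Sd_comp[OF x0 s(1)] by simp
      then show "x0 \<circ> s \<in> {x \<in> Sd d. w \<circ> inv x = v}" by simp
    qed
    show "(\<lambda>x. inv x0 \<circ> x) ` {x \<in> Sd d. w \<circ> inv x = v} \<subseteq> {x \<in> Sd d. w \<circ> x = w}"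
    proof (rule image_subsetI)
      fix x assume "x \<in> {x \<in> Sd d. w \<circ> inv x = v}"
      then have x: "x \<in> Sd d" "w \<circ> inv x = v" by auto
      have "w \<circ> (inv x0 \<circ> x) = (w \<circ> inv x0) \<circ> x" by (simp only: comp_assoc)
      also have "\<dots> = w \<circ> inv x \<circ> x" using x v by simp
      also have "\<dots> = w \<circ> (inv x \<circ> x)" by (simp only: comp_assoc)
      also have "\<dots> = w" using Sd_inv_o(2)[OF x(1)] by simp
      finally show "inv x0 \<circ> x \<in> {x \<in> Sd d. w \<circ> x = w}"
        using Sd_comp[OF Sd_inv[OF x0] x(1)] by simp
    qed
  qed
  from bij_betw_same_card[OF this] show ?thesis by (rule sym)
qed

definition ps :: "(nat \<Rightarrow> nat) \<Rightarrow> nat \<Rightarrow> nat" where "ps c j = (\<Sum>k=1..j. c k)"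

lemma wordof_ps: "wordof d c i = (if i \<in> {1..d} then (LEAST j. i \<le> ps c j) else 0)"
  unfolding wordof_def ps_def by simp

lemma ps_mono: "j \<le> j' \<Longrightarrow> ps c j \<le> ps c j'"
  unfolding ps_def by (rule sum_mono2) auto

lemma ps_Suc: "ps c (Suc j) = ps c j + c (Suc j)"
  unfolding ps_def by simp

lemma ps_0: "ps c 0 = 0"
  unfolding ps_def by simp

lemma wordof_in:
  assumes "ps c n = d" "i \<in> {1..d}"
  shows "wordof d c i \<in> {1..n}"
proof -
  have w: "wordof d c i = (LEAST j. i \<le> ps c j)" using assms(2) wordof_ps by simp
  have "i \<le> ps c n" using assms by simp
  then have le: "(LEAST j. i \<le> ps c j) \<le> n" by (rule Least_le)
  have "i \<le> ps c (LEAST j. i \<le> ps c j)" using LeastI[of "\<lambda>j. i \<le> ps c j", OF \<open>i \<le> ps c n\<close>] .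
  then have "(LEAST j. i \<le> ps c j) \<noteq> 0"
  proof (intro notI)
    assume "i \<le> ps c (LEAST j. i \<le> ps c j)" "(LEAST j. i \<le> ps c j) = 0"
    then have "i \<le> ps c 0" by simp
    then show False using assms(2) ps_0[of c] by simp
  qed
  then show ?thesis using w le by auto
qed

lemma wordof_eq:
  assumes "i \<in> {1..d}" "ps c j < i" "i \<le> ps c (Suc j)"
  shows "wordof d c i = Suc j"
proof -
  have "(LEAST j. i \<le> ps c j) = Suc j"
  proof (rule Least_equality)
    show "i \<le> ps c (Suc j)" by fact
    fix y assume "i \<le> ps c y"
    show "Suc j \<le> y"
    proof (rule ccontr)
      assume "\<not> Suc j \<le> y"
      then have "ps c y \<le> ps c j" by (intro ps_mono) simp
      then show False using assms(2) \<open>i \<le> ps c y\<close> by simp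
    qed
  qed
  then show ?thesis using assms(1) wordof_ps by simp
qed

lemma wordof_eqD:
  assumes "ps c n = d" "i \<in> {1..d}" "wordof d c i = Suc j"
  shows "ps c j < i \<and> i \<le> ps c (Suc j)"
proof -
  have w: "(LEAST j. i \<le> ps c j) = Suc j" using assms wordof_ps by simp
  have ex: "i \<le> ps c n" using assms by simp
  have "i \<le> ps c (Suc j)" using LeastI[of "\<lambda>j. i \<le> ps c j", OF ex] w by simp
  moreover have "\<not> i \<le> ps c j" using not_less_Least[of j "\<lambda>j. i \<le> ps c j"] w by simp
  ultimately show ?thesis by simp
qed

lemma wordof_count:
  assumes "ps c n = d" "Suc j \<le> n"
  shows "card {i\<in>{1..d}. wordof d c i = Suc j} = c (Suc j)"
proof -
  have le: "ps c (Suc j) \<le> d" using ps_mono[OF assms(2), of c] assms(1) by simp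
  have "{i\<in>{1..d}. wordof d c i = Suc j} = {Suc (ps c j)..ps c (Suc j)}"
  proof (intro set_eqI iffI)
    fix i assume "i \<in> {i\<in>{1..d}. wordof d c i = Suc j}"
    then have "i \<in> {1..d}" "wordof d c i = Suc j" by auto
    from wordof_eqD[OF assms(1) this] show "i \<in> {Suc (ps c j)..ps c (Suc j)}" by auto
  next
    fix i assume i: "i \<in> {Suc (ps c j)..ps c (Suc j)}"
    then have "i \<in> {1..d}" using le by auto
    then show "i \<in> {i\<in>{1..d}. wordof d c i = Suc j}" using wordof_eq[of i d c j] i by auto
  qed
  then show ?thesis using ps_Suc[of c j] by simp
qed

lemma ps_e:
  assumes "1 \<le> a" "c (Suc a) \<ge> 1"
  shows "ps (e_comp a c) j = (if j = a then Suc (ps c a) else ps c j)"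
proof -
  have ev: "\<And>k. e_comp a c k = (if k = a then c a + 1 else if k = Suc a then c (Suc a) - 1 else c k)"
    by (simp add: e_comp_def)
  show ?thesis
proof (induction j)
  case 0 then show ?case using assms by (simp add: ps_0)
next
  case (Suc j)
  have "ps (e_comp a c) (Suc j) = ps (e_comp a c) j + e_comp a c (Suc j)" by (rule ps_Suc)
  also have "\<dots> = (if Suc j = a then Suc (ps c a) else ps c (Suc j))"
    using Suc assms ps_Suc[of c j] ev[of "Suc j"] by auto
  finally show ?case .
qed
qed

lemma ps_f:
  assumes "1 \<le> a" "c a \<ge> 1"
  shows "ps (f_comp a c) j = (if j = a then ps c a - 1 else ps c j)"
proof -
  have fv: "\<And>k. f_comp a c k = (if k = a then c a - 1 else if k = Suc a then c (Suc a) + 1 else c k)"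
    by (simp add: f_comp_def)
  show ?thesis
proof (induction j)
  case 0 then show ?case using assms by (simp add: ps_0)
next
  case (Suc j)
  have pa: "ps c a \<ge> 1" using assms ps_Suc[of c "a - 1"] by (cases a) auto
  have "ps (f_comp a c) (Suc j) = ps (f_comp a c) j + f_comp a c (Suc j)" by (rule ps_Suc)
  also have "\<dots> = (if Suc j = a then ps c a - 1 else ps c (Suc j))"
    using Suc assms ps_Suc[of c j] pa fv[of "Suc j"] by auto
  finally show ?case .
qed
qed

lemma e_case:
  assumes "1 \<le> a" "a < n" "ps c n = d" "c (Suc a) \<ge> 1"
  defines "p \<equiv> Suc (ps c a)"
  shows "p \<in> {1..d}" "wordof d c p = Suc a" "wordof d (e_comp a c) = (wordof d c)(p := a)"
proof -
  have "ps c (Suc a) \<le> d" using ps_mono[of "Suc a" n c] assms by simp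
  then show pd: "p \<in> {1..d}" using ps_Suc[of c a] assms unfolding p_def by auto
  show wp: "wordof d c p = Suc a" using wordof_eq[OF pd, of c a] ps_Suc[of c a] assms unfolding p_def by simp
  show "wordof d (e_comp a c) = (wordof d c)(p := a)"
  proof
    fix i
    show "wordof d (e_comp a c) i = ((wordof d c)(p := a)) i"
    proof (cases "i \<in> {1..d}")
      case False then show ?thesis using pd by (auto simp: wordof_ps)
    next
      case True
      show ?thesis
      proof (cases "i = p")
        case ip: True
        have "(LEAST j. i \<le> ps (e_comp a c) j) = a"
        proof (rule Least_equality)
          show "i \<le> ps (e_comp a c) a" using ps_e[where a=a and c=c, OF assms(1,4)] ip p_def by simp
          fix y assume y: "i \<le> ps (e_comp a c) y"
          show "a \<le> y"
          proof (rule ccontr)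
            assume "\<not> a \<le> y"
            then have "ps c y \<le> ps c a" "y \<noteq> a" by (auto intro: ps_mono)
            then show False using y ps_e[where a=a and c=c, OF assms(1,4)] ip p_def by simp
          qed
        qed
        then show ?thesis using True ip by (simp add: wordof_ps)
      next
        case False
        have "(\<lambda>j. i \<le> ps (e_comp a c) j) = (\<lambda>j. i \<le> ps c j)"
          using False ps_e[where a=a and c=c, OF assms(1,4)] p_def by (auto simp: fun_eq_iff)
        then show ?thesis using True False by (simp add: wordof_ps)
      qed
    qed
  qed
qed

lemma f_case:
  assumes "1 \<le> a" "a < n" "ps c n = d" "c a \<ge> 1"
  defines "p \<equiv> ps c a"
  shows "p \<in> {1..d}" "wordof d c p = a" "wordof d (f_comp a c) = (wordof d c)(p := Suc a)"
proof -
  obtain a' where a': "a = Suc a'" using assms(1) by (cases a) auto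
  have pa: "ps c a = ps c a' + c a" using ps_Suc[of c a'] a' by simp
  have "ps c a \<le> d" using ps_mono[of a n c] assms by simp
  then show pd: "p \<in> {1..d}" using pa assms unfolding p_def by auto
  show wp: "wordof d c p = a" using wordof_eq[OF pd, of c a'] pa assms a' unfolding p_def by simp
  show "wordof d (f_comp a c) = (wordof d c)(p := Suc a)"
  proof
    fix i
    show "wordof d (f_comp a c) i = ((wordof d c)(p := Suc a)) i"
    proof (cases "i \<in> {1..d}")
      case False then show ?thesis using pd by (auto simp: wordof_ps)
    next
      case True
      show ?thesis
      proof (cases "i = p")
        case ip: True
        have "(LEAST j. i \<le> ps (f_comp a c) j) = Suc a"
        proof (rule Least_equality)
          show "i \<le> ps (f_comp a c) (Suc a)" using ps_f[where a=a and c=c, OF assms(1,4)] ip p_def ps_Suc[of c a] by simp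
          fix y assume y: "i \<le> ps (f_comp a c) y"
          show "Suc a \<le> y"
          proof (rule ccontr)
            assume "\<not> Suc a \<le> y"
            then have "y \<le> a" by simp
            show False
            proof (cases "y = a")
              case True then show False using y ps_f[where a=a and c=c, OF assms(1,4)] ip p_def pa assms(4) by simp
            next
              case False
              then have "ps c y \<le> ps c a'" using \<open>y \<le> a\<close> a' by (intro ps_mono) simp
              then show False using y ps_f[where a=a and c=c, OF assms(1,4)] ip p_def pa assms(4) False by simp
            qed
          qed
        qed
        then show ?thesis using True ip by (simp add: wordof_ps)
      next
        case False
        have "(\<lambda>j. i \<le> ps (f_comp a c) j) = (\<lambda>j. i \<le> ps c j)"
          using False ps_f[where a=a and c=c, OF assms(1,4)] p_def True by (auto simp: fun_eq_iff)
        then show ?thesis using True False by (simp add: wordof_ps)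
      qed
    qed
  qed
qed

lemma inv_comp_Sd: "x \<in> Sd d \<Longrightarrow> y \<in> Sd d \<Longrightarrow> inv (x \<circ> y) = inv y \<circ> inv x"
  using Sd_bij o_inv_distrib by blast

lemma cancel1: "x \<in> Sd d \<Longrightarrow> inv x \<circ> (x \<circ> y) = y"
  using Sd_inv_o(2)[of x d] by (simp only: o_assoc id_comp)
lemma cancel2: "x \<in> Sd d \<Longrightarrow> x \<circ> (inv x \<circ> y) = y"
  using Sd_inv_o(1)[of x d] by (simp only: o_assoc id_comp)
lemma cancel3: "x \<in> Sd d \<Longrightarrow> f \<circ> inv x \<circ> x = f"
  using Sd_inv_o(2)[of x d] by (simp only: comp_assoc comp_id)
lemma cancel4: "x \<in> Sd d \<Longrightarrow> f \<circ> x \<circ> inv x = f"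
  using Sd_inv_o(1)[of x d] by (simp only: comp_assoc comp_id)

lemma block_eq: "x \<in> Sd d \<Longrightarrow> (w \<circ> inv x = w) = (w \<circ> x = w)"
proof
  assume x: "x \<in> Sd d" and h: "w \<circ> inv x = w"
  have "w \<circ> x = (w \<circ> inv x) \<circ> x" using h by simp
  also have "\<dots> = w" using cancel3[OF x] .
  finally show "w \<circ> x = w" .
next
  assume x: "x \<in> Sd d" and h: "w \<circ> x = w"
  have "w \<circ> inv x = (w \<circ> x) \<circ> inv x" using h by simp
  also have "\<dots> = w" using cancel4[OF x] .
  finally show "w \<circ> inv x = w" .
qed

definition tensG :: "nat \<Rightarrow> nat \<Rightarrow> nat \<Rightarrow> ((nat \<Rightarrow> nat) \<Rightarrow> 'm) \<Rightarrow> (nat \<Rightarrow> nat) \<Rightarrow> 'm::comm_monoid_add" where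
  "tensG d t s T u = (\<Sum>i\<in>{i\<in>{1..d}. u i = t}. T (u(i := s)))"

definition SWG where
  "SWG sc \<rho> n d t s c c2 m = (THE m'. m' \<in> invariants \<rho> (block d c2) \<and>
     (\<forall>u\<in>words n d. SW_embed sc \<rho> d c2 m' u = tensG d t s (SW_embed sc \<rho> d c m) u))"

lemma SW_E_G: "SW_E sc \<rho> n d a dd m = SWG sc \<rho> n d a (Suc a) dd (e_comp a dd) m"
  unfolding SW_E_def SWG_def tensE_def tensG_def ..

lemma SW_F_G: "SW_F sc \<rho> n d a dd m = SWG sc \<rho> n d (Suc a) a dd (f_comp a dd) m"
  unfolding SW_F_def SWG_def tensF_def tensG_def ..

locale smod =
  fixes sc :: "complex \<Rightarrow> 'm::comm_monoid_add \<Rightarrow> 'm" and rho :: "(nat \<Rightarrow> nat) \<Rightarrow> 'm \<Rightarrow> 'm" and d :: nat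
  assumes sc_mult: "sc (a * b) m = sc a (sc b m)"
  and sc_one: "sc 1 m = m"
  and sc_addl: "sc (a + b) m = sc a m + sc b m"
  and sc_zerol: "sc 0 m = 0"
  and sc_addr: "sc a (m1 + m2) = sc a m1 + sc a m2"
  and sc_zeror: "sc a 0 = 0"
  and rho_add: "x \<in> Sd d \<Longrightarrow> rho x (m1 + m2) = rho x m1 + rho x m2"
  and rho_zero: "x \<in> Sd d \<Longrightarrow> rho x 0 = 0"
  and rho_sc: "x \<in> Sd d \<Longrightarrow> rho x (sc a m) = sc a (rho x m)"
  and rho_comp: "x \<in> Sd d \<Longrightarrow> y \<in> Sd d \<Longrightarrow> rho (x \<circ> y) m = rho x (rho y m)"
begin

lemma sc_sum: "sc a (sum f A) = (\<Sum>i\<in>A. sc a (f i))"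
  by (induction A rule: infinite_finite_induct) (auto simp: sc_zeror sc_addr)

lemma rho_sum: "x \<in> Sd d \<Longrightarrow> rho x (sum f A) = (\<Sum>i\<in>A. rho x (f i))"
  by (induction A rule: infinite_finite_induct) (auto simp: rho_zero rho_add)

lemma sum_const_sc: "finite A \<Longrightarrow> (\<Sum>i\<in>A. m) = sc (of_nat (card A)) m"
proof (induction A rule: finite_induct)
  case empty then show ?case by (simp add: sc_zerol)
next
  case (insert x F)
  then have "(\<Sum>i\<in>insert x F. m) = sc 1 m + sc (of_nat (card F)) m" by (simp add: sc_one)
  also have "\<dots> = sc (of_nat (card (insert x F))) m" using insert by (simp add: sc_addl[symmetric] add.commute)
  finally show ?case .
qed

lemma embed_equiv:
  assumes x: "x \<in> Sd d"
  shows "SW_embed sc rho d c m (u \<circ> inv x) = rho x (SW_embed sc rho d c m u)"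
proof -
  let ?w = "wordof d c"
  have "(\<Sum>z\<in>{z\<in>Sd d. ?w \<circ> inv z = u \<circ> inv x}. rho z m) = (\<Sum>y\<in>{y\<in>Sd d. ?w \<circ> inv y = u}. rho (x \<circ> y) m)"
  proof (rule sum.reindex_bij_witness[where i = "\<lambda>y. x \<circ> y" and j = "\<lambda>z. inv x \<circ> z"])
    fix z assume "z \<in> {z\<in>Sd d. ?w \<circ> inv z = u \<circ> inv x}"
    then have z: "z \<in> Sd d" "?w \<circ> inv z = u \<circ> inv x" by auto
    show "x \<circ> (inv x \<circ> z) = z" using cancel2[OF x] .
    show "rho (x \<circ> (inv x \<circ> z)) m = rho z m" by (subst cancel2[OF x]) (rule refl)
    have "inv (inv x \<circ> z) = inv z \<circ> inv (inv x)" using inv_comp_Sd[OF Sd_inv[OF x] z(1)] .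
    then have "?w \<circ> inv (inv x \<circ> z) = (?w \<circ> inv z) \<circ> x" using Sd_inv_inv[OF x] by (simp only: comp_assoc)
    also have "\<dots> = u" unfolding z(2) using cancel3[OF x] .
    finally show "inv x \<circ> z \<in> {y\<in>Sd d. ?w \<circ> inv y = u}" using Sd_comp[OF Sd_inv[OF x] z(1)] by simp
  next
    fix y assume "y \<in> {y\<in>Sd d. ?w \<circ> inv y = u}"
    then have y: "y \<in> Sd d" "?w \<circ> inv y = u" by auto
    show "inv x \<circ> (x \<circ> y) = y" using cancel1[OF x] .
    have "?w \<circ> inv (x \<circ> y) = (?w \<circ> inv y) \<circ> inv x" using inv_comp_Sd[OF x y(1)] by (simp only: comp_assoc)
    then show "x \<circ> y \<in> {z\<in>Sd d. ?w \<circ> inv z = u \<circ> inv x}" using Sd_comp[OF x y(1)] y(2) by simp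
  qed
  also have "\<dots> = rho x (\<Sum>y\<in>{y\<in>Sd d. ?w \<circ> inv y = u}. rho y m)"
    unfolding rho_sum[OF x] by (rule sum.cong) (auto simp: rho_comp[OF x])
  finally show ?thesis unfolding SW_embed_def using rho_sc[OF x] by simp
qed

lemma tens_equiv:
  assumes x: "x \<in> Sd d" and T: "\<And>v. T (v \<circ> inv x) = rho x (T v)"
  shows "tensG d t s T (u \<circ> inv x) = rho x (tensG d t s T u)"
proof -
  have "tensG d t s T (u \<circ> inv x) = (\<Sum>i\<in>{i\<in>{1..d}. u (inv x i) = t}. rho x (T (u(inv x i := s))))"
    unfolding tensG_def
  proof (rule sum.cong)
    fix i assume "i \<in> {i\<in>{1..d}. u (inv x i) = t}"
    have "T ((u \<circ> inv x)(i := s)) = T (u(inv x i := s) \<circ> inv x)" by (simp only: upd_comp[OF x])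
    also have "\<dots> = rho x (T (u(inv x i := s)))" by (rule T)
    finally show "T ((u \<circ> inv x)(i := s)) = rho x (T (u(inv x i := s)))" .
  qed simp
  also have "\<dots> = (\<Sum>j\<in>{j\<in>{1..d}. u j = t}. rho x (T (u(j := s))))"
  proof (rule sum.reindex_bij_witness[where i = "\<lambda>j. x j" and j = "\<lambda>i. inv x i"])
    fix i assume "i \<in> {i\<in>{1..d}. u (inv x i) = t}"
    then show "x (inv x i) = i" "inv x i \<in> {j\<in>{1..d}. u j = t}"
      using Sd_inv_app(1)[OF x] Sd_mem[OF Sd_inv[OF x]] by auto
  next
    fix j assume "j \<in> {j\<in>{1..d}. u j = t}"
    then show "inv x (x j) = j" "x j \<in> {i\<in>{1..d}. u (inv x i) = t}"
      using Sd_inv_app(2)[OF x] Sd_mem[OF x] by auto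
  qed simp
  also have "\<dots> = rho x (tensG d t s T u)" unfolding tensG_def rho_sum[OF x] ..
  finally show ?thesis .
qed

end

context smod begin

lemma SWG_char:
  assumes w2: "wordof d c2 = (wordof d c)(p := t)" and wp: "wordof d c p = s" and p: "p \<in> {1..d}"
    and w2w: "wordof d c2 \<in> words n d"
  shows "SWG sc rho n d t s c c2 m
      = sc (fact d / of_nat (card (block d c2))) (tensG d t s (SW_embed sc rho d c m) (wordof d c2))"
    "sc (fact d / of_nat (card (block d c2))) (tensG d t s (SW_embed sc rho d c m) (wordof d c2))
      \<in> invariants rho (block d c2)"
proof -
  define w where "w = wordof d c"
  define ww where "ww = wordof d c2"
  define T where "T = tensG d t s (SW_embed sc rho d c m)"
  define K where "K = card (block d c2)"
  define m0 where "m0 = sc (fact d / of_nat K) (T ww)"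
  have Tinv: "\<And>x v. x \<in> Sd d \<Longrightarrow> T (v \<circ> inv x) = rho x (T v)"
    unfolding T_def by (rule tens_equiv) (auto intro: embed_equiv)
  have S2: "block d c2 = {x\<in>Sd d. ww \<circ> x = ww}" unfolding block_def ww_def ..
  have S2': "{x\<in>Sd d. ww \<circ> inv x = ww} = block d c2" unfolding S2 using block_eq by blast
  have finS2: "finite (block d c2)" unfolding S2 using Sd_finite by auto
  have "id \<in> block d c2" unfolding S2 using Sd_id by simp
  then have K0: "K \<noteq> 0" unfolding K_def using finS2 by auto
  have fd0: "(fact d :: complex) \<noteq> 0" by simp
  have emb: "SW_embed sc rho d c2 m'' ww = sc (inverse (fact d) * of_nat K) m''"
    if m'': "m'' \<in> invariants rho (block d c2)" for m''
  proof -
    have "SW_embed sc rho d c2 m'' ww = sc (inverse (fact d)) (\<Sum>x\<in>block d c2. rho x m'')"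
      unfolding SW_embed_def ww_def[symmetric] S2' ..
    also have "(\<Sum>x\<in>block d c2. rho x m'') = (\<Sum>x\<in>block d c2. m'')"
      using m'' unfolding invariants_def by simp
    also have "\<dots> = sc (of_nat K) m''" unfolding K_def by (rule sum_const_sc[OF finS2])
    finally show ?thesis by (simp add: sc_mult)
  qed
  have Tww: "rho x (T ww) = T ww" if "x \<in> block d c2" for x
  proof -
    have x: "x \<in> Sd d" "ww \<circ> inv x = ww" using that S2' by auto
    have "rho x (T ww) = T (ww \<circ> inv x)" using Tinv[OF x(1)] by simp
    then show ?thesis using x(2) by simp
  qed
  have m0inv: "m0 \<in> invariants rho (block d c2)"
    unfolding invariants_def m0_def
  proof (intro CollectI ballI)
    fix x assume x: "x \<in> block d c2"
    then have "x \<in> Sd d" unfolding S2 by auto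
    then show "rho x (sc (fact d / of_nat K) (T ww)) = sc (fact d / of_nat K) (T ww)"
      using rho_sc Tww[OF x] by simp
  qed
  have k1: "inverse (fact d) * of_nat K * (fact d / of_nat K) = (1::complex)"
    using K0 fd0 by (simp add: field_simps)
  have scm0: "sc (inverse (fact d) * of_nat K) m0 = T ww"
    unfolding m0_def sc_mult[symmetric] k1 sc_one ..
  have P: "\<forall>u\<in>words n d. SW_embed sc rho d c2 m0 u = T u"
  proof
    fix u assume "u \<in> words n d"
    show "SW_embed sc rho d c2 m0 u = T u"
    proof (cases "\<exists>x0\<in>Sd d. u = ww \<circ> inv x0")
      case True
      then obtain x0 where x0: "x0 \<in> Sd d" "u = ww \<circ> inv x0" by blast
      have "SW_embed sc rho d c2 m0 u = rho x0 (SW_embed sc rho d c2 m0 ww)"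
        unfolding x0(2) ww_def by (rule embed_equiv[OF x0(1)])
      also have "\<dots> = rho x0 (T ww)" using emb[OF m0inv] scm0 by simp
      also have "\<dots> = T u" using Tinv[OF x0(1)] x0(2) by simp
      finally show ?thesis .
    next
      case False
      have e1: "{x\<in>Sd d. ww \<circ> inv x = u} = {}" using False by auto
      have "SW_embed sc rho d c2 m0 u = 0"
        unfolding SW_embed_def ww_def[symmetric] e1 by (simp add: sc_zeror)
      moreover have "T u = 0"
        unfolding T_def tensG_def
      proof (rule sum.neutral, rule ballI)
        fix i assume i: "i \<in> {i\<in>{1..d}. u i = t}"
        have e2: "{y\<in>Sd d. w \<circ> inv y = u(i := s)} = {}"
        proof (rule ccontr)
          assume "{y\<in>Sd d. w \<circ> inv y = u(i := s)} \<noteq> {}"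
          then obtain y where y: "y \<in> Sd d" "w \<circ> inv y = u(i := s)" by blast
          define j where "j = inv y i"
          have j: "j \<in> {1..d}" unfolding j_def using Sd_mem[OF Sd_inv[OF y(1)]] i by blast
          have wj: "w j = s" unfolding j_def using fun_cong[OF y(2), of i] by simp
          have "u = (u(i := s))(i := t)" using i by (auto simp: fun_eq_iff)
          also have "\<dots> = (w \<circ> inv y)(i := t)" using y(2) by simp
          also have "\<dots> = w(j := t) \<circ> inv y" unfolding j_def by (rule upd_comp[OF y(1)])
          also have "w(j := t) = ww \<circ> tr p j"
            by (rule orbit_swap[symmetric]) (use w2 wp wj in \<open>auto simp: w_def ww_def\<close>)
          also have "ww \<circ> tr p j \<circ> inv y = ww \<circ> inv (y \<circ> tr p j)"
            using inv_comp_Sd[OF y(1) Sd_tr[OF p j]] inv_tr by (simp add: comp_assoc)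
          finally have "u = ww \<circ> inv (y \<circ> tr p j)" .
          then show False using False Sd_comp[OF y(1) Sd_tr[OF p j]] by blast
        qed
        show "SW_embed sc rho d c m (u(i := s)) = 0"
          unfolding SW_embed_def w_def[symmetric] e2 by (simp add: sc_zeror)
      qed
      ultimately show ?thesis by simp
    qed
  qed
  have k2: "fact d / of_nat K * (inverse (fact d) * of_nat K) = (1::complex)"
    using K0 fd0 by (simp add: field_simps)
  have uniq: "m'' = m0" if h: "m'' \<in> invariants rho (block d c2) \<and> (\<forall>u\<in>words n d. SW_embed sc rho d c2 m'' u = T u)" for m''
  proof -
    have h1: "SW_embed sc rho d c2 m'' ww = T ww" using h w2w unfolding ww_def by blast
    have h2: "SW_embed sc rho d c2 m'' ww = sc (inverse (fact d) * of_nat K) m''"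
      by (rule emb) (use h in blast)
    have "m0 = sc (fact d / of_nat K) (sc (inverse (fact d) * of_nat K) m'')"
      unfolding m0_def h2[symmetric] h1 ..
    also have "\<dots> = m''" unfolding sc_mult[symmetric] k2 sc_one ..
    finally show ?thesis by (rule sym)
  qed
  have "SWG sc rho n d t s c c2 m = m0"
    unfolding SWG_def T_def[symmetric]
  proof (rule the_equality)
    show "m0 \<in> invariants rho (block d c2) \<and> (\<forall>u\<in>words n d. SW_embed sc rho d c2 m0 u = T u)"
      using m0inv P by blast
  qed (rule uniq)
  then show "SWG sc rho n d t s c c2 m
      = sc (fact d / of_nat (card (block d c2))) (tensG d t s (SW_embed sc rho d c m) (wordof d c2))"
    unfolding m0_def K_def T_def ww_def .
  show "sc (fact d / of_nat (card (block d c2))) (tensG d t s (SW_embed sc rho d c m) (wordof d c2))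
      \<in> invariants rho (block d c2)" using m0inv unfolding m0_def K_def T_def ww_def .
qed

end

lemma smod_V:
  fixes \<rho> :: "(nat \<Rightarrow> nat) \<Rightarrow> complex^'k \<Rightarrow> complex^'k"
  assumes lin: "\<forall>x\<in>Sd d. Vector_Spaces.linear (*s) (*s) (\<rho> x)"
    and rep_mult: "\<forall>x\<in>Sd d. \<forall>y\<in>Sd d. \<rho> (x \<circ> y) = \<rho> x \<circ> \<rho> y"
  shows "smod (*s) \<rho> d"
proof
  fix a b :: complex and m m1 m2 :: "complex^'k" and x y :: "nat \<Rightarrow> nat"
  show "(a * b) *s m = a *s (b *s m)" by (simp add: vector_smult_assoc)
  show "1 *s m = m" by simp
  show "(a + b) *s m = a *s m + b *s m" by (rule vector_sadd_rdistrib)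
  show "0 *s m = 0" by simp
  show "a *s (m1 + m2) = a *s m1 + a *s m2" by (rule vector_add_ldistrib)
  show "a *s (0::complex^'k) = 0" by simp
  show "x \<in> Sd d \<Longrightarrow> \<rho> x (m1 + m2) = \<rho> x m1 + \<rho> x m2" using lin vec.linear_add by blast
  show "x \<in> Sd d \<Longrightarrow> \<rho> x 0 = 0" using lin vec.linear_0 by blast
  show "x \<in> Sd d \<Longrightarrow> \<rho> x (a *s m) = a *s \<rho> x m" using lin vec.linear_scale by blast
  show "x \<in> Sd d \<Longrightarrow> y \<in> Sd d \<Longrightarrow> \<rho> (x \<circ> y) m = \<rho> x (\<rho> y m)" using rep_mult by simp
qed

lemma smod_dual:
  fixes \<rho> :: "(nat \<Rightarrow> nat) \<Rightarrow> 'v \<Rightarrow> 'v"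
  assumes rep_mult: "\<forall>x\<in>Sd d. \<forall>y\<in>Sd d. \<rho> (x \<circ> y) = \<rho> x \<circ> \<rho> y"
  shows "smod dual_scale (dual_act \<rho>) d"
proof
  fix a b :: complex and m m1 m2 :: "'v \<Rightarrow> complex" and x y :: "nat \<Rightarrow> nat"
  show "dual_scale (a * b) m = dual_scale a (dual_scale b m)" by (simp add: dual_scale_def mult.assoc)
  show "dual_scale 1 m = m" by (simp add: dual_scale_def)
  show "dual_scale (a + b) m = dual_scale a m + dual_scale b m" by (simp add: dual_scale_def fun_eq_iff algebra_simps)
  show "dual_scale 0 m = 0" by (simp add: dual_scale_def fun_eq_iff)
  show "dual_scale a (m1 + m2) = dual_scale a m1 + dual_scale a m2" by (simp add: dual_scale_def fun_eq_iff algebra_simps)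
  show "dual_scale a (0 :: 'v \<Rightarrow> complex) = 0" by (simp add: dual_scale_def fun_eq_iff)
  show "dual_act \<rho> x (m1 + m2) = dual_act \<rho> x m1 + dual_act \<rho> x m2" by (simp add: dual_act_def fun_eq_iff)
  show "dual_act \<rho> x 0 = 0" by (simp add: dual_act_def fun_eq_iff)
  show "dual_act \<rho> x (dual_scale a m) = dual_scale a (dual_act \<rho> x m)" by (simp add: dual_act_def dual_scale_def fun_eq_iff)
  assume x: "x \<in> Sd d" and y: "y \<in> Sd d"
  have "inv (x \<circ> y) = inv y \<circ> inv x" by (rule inv_comp_Sd[OF x y])
  then have "\<rho> (inv (x \<circ> y)) = \<rho> (inv y) \<circ> \<rho> (inv x)" using rep_mult Sd_inv[OF x] Sd_inv[OF y] by simp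
  then show "dual_act \<rho> (x \<circ> y) m = dual_act \<rho> x (dual_act \<rho> y m)"
    unfolding dual_act_def by (simp add: comp_assoc)
qed

lemma sum_fun_apply: "(sum f A) v = (\<Sum>i\<in>A. f i v)"
  by (induction A rule: infinite_finite_induct) auto

lemma block_group:
  assumes "h \<in> block d c" "g \<in> block d c"
  shows "h \<circ> g \<in> block d c" "inv h \<circ> g \<in> block d c" "h \<circ> (inv h \<circ> g) = g" "inv h \<circ> (h \<circ> g) = g"
proof -
  have h: "h \<in> Sd d" "wordof d c \<circ> h = wordof d c" and g: "g \<in> Sd d" "wordof d c \<circ> g = wordof d c"
    using assms unfolding block_def by auto
  have "wordof d c \<circ> (h \<circ> g) = (wordof d c \<circ> h) \<circ> g" by (simp only: comp_assoc)
  then show "h \<circ> g \<in> block d c" using h g Sd_comp[OF h(1) g(1)] unfolding block_def by simp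
  have hi: "wordof d c \<circ> inv h = wordof d c" using block_eq[OF h(1)] h(2) by blast
  have "wordof d c \<circ> (inv h \<circ> g) = (wordof d c \<circ> inv h) \<circ> g" by (simp only: comp_assoc)
  then show "inv h \<circ> g \<in> block d c" using hi g Sd_comp[OF Sd_inv[OF h(1)] g(1)] unfolding block_def by simp
  show "h \<circ> (inv h \<circ> g) = g" by (rule cancel2[OF h(1)])
  show "inv h \<circ> (h \<circ> g) = g" by (rule cancel1[OF h(1)])
qed

lemma block_fin: "finite (block d c)" "id \<in> block d c" "card (block d c) \<noteq> 0"
proof -
  show f: "finite (block d c)" unfolding block_def using Sd_finite by auto
  show i: "id \<in> block d c" unfolding block_def using Sd_id by simp
  show "card (block d c) \<noteq> 0" using f i by auto
qed

lemma avg_props: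
  fixes \<rho> :: "(nat \<Rightarrow> nat) \<Rightarrow> complex^'k \<Rightarrow> complex^'k"
  assumes lin: "\<forall>x\<in>Sd d. Vector_Spaces.linear (*s) (*s) (\<rho> x)"
    and rep_mult: "\<forall>x\<in>Sd d. \<forall>y\<in>Sd d. \<rho> (x \<circ> y) = \<rho> x \<circ> \<rho> y"
  shows "avg \<rho> d c v \<in> invariants \<rho> (block d c)"
    "avg \<rho> d c (v + w) = avg \<rho> d c v + avg \<rho> d c w"
    "avg \<rho> d c (a *s v) = a *s avg \<rho> d c v"
    "v \<in> invariants \<rho> (block d c) \<Longrightarrow> avg \<rho> d c v = v"
proof -
  have bS: "\<And>g. g \<in> block d c \<Longrightarrow> g \<in> Sd d" unfolding block_def by auto
  have lg: "\<And>g. g \<in> block d c \<Longrightarrow> Vector_Spaces.linear (*s) (*s) (\<rho> g)" using lin bS by blast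
  show "avg \<rho> d c v \<in> invariants \<rho> (block d c)"
    unfolding invariants_def
  proof (intro CollectI ballI)
    fix h assume h: "h \<in> block d c"
    have "\<rho> h (\<Sum>g\<in>block d c. \<rho> g v) = (\<Sum>g\<in>block d c. \<rho> h (\<rho> g v))" using vec.linear_sum[OF lg[OF h]] .
    also have "\<dots> = (\<Sum>g\<in>block d c. \<rho> (h \<circ> g) v)" using rep_mult bS h by simp
    also have "\<dots> = (\<Sum>g\<in>block d c. \<rho> g v)"
      by (rule sum.reindex_bij_witness[where j = "\<lambda>g. h \<circ> g" and i = "\<lambda>g. inv h \<circ> g"])
         (use block_group[OF h] in auto)
    finally show "\<rho> h (avg \<rho> d c v) = avg \<rho> d c v"
      unfolding avg_def vec.linear_scale[OF lg[OF h]] by simp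
  qed
  show "avg \<rho> d c (v + w) = avg \<rho> d c v + avg \<rho> d c w"
    unfolding avg_def using vec.linear_add[OF lg]
    by (simp add: sum.distrib vector_add_ldistrib)
  show "avg \<rho> d c (a *s v) = a *s avg \<rho> d c v"
    unfolding avg_def using vec.linear_scale[OF lg]
    by (simp add: vec.scale_sum_right[symmetric] vector_smult_assoc mult.commute)
  assume v: "v \<in> invariants \<rho> (block d c)"
  then have "(\<Sum>g\<in>block d c. \<rho> g v) = (\<Sum>g\<in>block d c. v)" unfolding invariants_def by simp
  also have "\<dots> = of_nat (card (block d c)) *s v"
    using smod.sum_const_sc[OF smod_V[OF lin rep_mult] block_fin(1)] .
  finally show "avg \<rho> d c v = v" unfolding avg_def using block_fin(3)[of d c]
    by (simp add: vector_smult_assoc)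
qed

lemma final_generic:
  fixes \<rho> :: "(nat \<Rightarrow> nat) \<Rightarrow> complex^'k \<Rightarrow> complex^'k" and \<phi> :: "complex^'k \<Rightarrow> complex"
  assumes lin: "\<forall>x\<in>Sd d. Vector_Spaces.linear (*s) (*s) (\<rho> x)"
    and rep_mult: "\<forall>x\<in>Sd d. \<forall>y\<in>Sd d. \<rho> (x \<circ> y) = \<rho> x \<circ> \<rho> y"
    and w2: "wordof d c2 = (wordof d c)(p := t)" and wp: "wordof d c p = s" and p: "p \<in> {1..d}"
    and st: "s \<noteq> t"
    and w2w: "wordof d c2 \<in> words n d" and ww: "wordof d c \<in> words n d"
    and cs: "card {j\<in>{1..d}. wordof d c j = s} = Ks" and ct: "card {j\<in>{1..d}. wordof d c j = t} = Kt"
    and Ks: "Ks \<ge> 1"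
    and padd: "\<forall>v\<in>invariants \<rho> (block d c). \<forall>w\<in>invariants \<rho> (block d c). \<phi> (v + w) = \<phi> v + \<phi> w"
    and psc: "\<forall>a. \<forall>v\<in>invariants \<rho> (block d c). \<phi> (a *s v) = a * \<phi> v"
  shows "SWG dual_scale (dual_act \<rho>) n d t s c c2 (\<phi> \<circ> avg \<rho> d c) u
       = \<phi> ((of_nat Ks / of_nat (Kt + 1)) *s SWG (*s) \<rho> n d s t c2 c u)"
proof -
  define w where "w = wordof d c"
  define ww where "ww = wordof d c2"
  define \<psi> where "\<psi> = \<phi> \<circ> avg \<rho> d c"
  define fd where "fd = (fact d :: complex)"
  define S where "S = card (block d c)"
  define S2 where "S2 = card (block d c2)"
  define g where "g = (\<lambda>y. \<psi> (\<rho> y u))"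
  define Q where "Q = (\<Sum>j\<in>{j\<in>{1..d}. w j = s}. \<Sum>y\<in>{y\<in>Sd d. ww \<circ> inv y = w(j := t)}. g y)"
  have fd0: "fd \<noteq> 0" unfolding fd_def by simp
  have S0: "S \<noteq> 0" unfolding S_def by (rule block_fin(3))
  have S20: "S2 \<noteq> 0" unfolding S2_def by (rule block_fin(3))
  interpret D: smod dual_scale "dual_act \<rho>" d by (rule smod_dual[OF rep_mult])
  interpret V: smod "(*s)" \<rho> d by (rule smod_V[OF lin rep_mult])
  note av = avg_props[OF lin rep_mult]
  have psi_add: "\<psi> (v1 + v2) = \<psi> v1 + \<psi> v2" for v1 v2
    unfolding \<psi>_def using av(1,2) padd by simp
  have psi_sc: "\<psi> (a *s v1) = a * \<psi> v1" for a v1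
    unfolding \<psi>_def using av(1,3) psc by simp
  have psi0: "\<psi> 0 = 0" using psi_sc[of 0 0] by simp
  have psi_sum: "\<psi> (sum f A) = (\<Sum>i\<in>A. \<psi> (f i))" for f :: "'z \<Rightarrow> complex^'k" and A
    by (induction A rule: infinite_finite_induct) (auto simp: psi0 psi_add)
  have L: "SWG dual_scale (dual_act \<rho>) n d t s c c2 \<psi> u
      = fd / of_nat S2 * (\<Sum>i\<in>{i\<in>{1..d}. ww i = t}. inverse fd * (\<Sum>x\<in>{x\<in>Sd d. w \<circ> inv x = ww(i := s)}. g (inv x)))"
    unfolding D.SWG_char(1)[OF w2 wp p w2w]
    unfolding dual_scale_def tensG_def sum_fun_apply SW_embed_def dual_act_def
    unfolding fd_def S2_def w_def ww_def g_def by simp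
  have w2': "wordof d c = (wordof d c2)(p := s)" using w2 wp by (auto simp: fun_eq_iff)
  have wp': "wordof d c2 p = t" using w2 by simp
  define X where "X = SWG (*s) \<rho> n d s t c2 c u"
  have Xinv: "X \<in> invariants \<rho> (block d c)"
    unfolding X_def V.SWG_char(1)[OF w2' wp' p ww] by (rule V.SWG_char(2)[OF w2' wp' p ww])
  have X: "X = (fd / of_nat S) *s (\<Sum>j\<in>{j\<in>{1..d}. w j = s}. inverse fd *s (\<Sum>y\<in>{y\<in>Sd d. ww \<circ> inv y = w(j := t)}. \<rho> y u))"
    unfolding X_def V.SWG_char(1)[OF w2' wp' p ww]
    unfolding tensG_def SW_embed_def fd_def S_def w_def ww_def ..
  have "\<phi> ((of_nat Ks / of_nat (Kt + 1)) *s X) = (of_nat Ks / of_nat (Kt + 1)) * \<phi> X"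
    using psc Xinv by blast
  also have "\<phi> X = \<psi> X" unfolding \<psi>_def using av(4)[OF Xinv] by simp
  also have "\<psi> X = fd / of_nat S * (\<Sum>j\<in>{j\<in>{1..d}. w j = s}. inverse fd * (\<Sum>y\<in>{y\<in>Sd d. ww \<circ> inv y = w(j := t)}. g y))"
    unfolding X psi_sc psi_sum g_def ..
  finally have R: "\<phi> ((of_nat Ks / of_nat (Kt + 1)) *s X)
     = (of_nat Ks / of_nat (Kt + 1)) * (fd / of_nat S * (inverse fd * Q))"
    unfolding Q_def sum_distrib_left by simp
  have L': "SWG dual_scale (dual_act \<rho>) n d t s c c2 \<psi> u = fd / of_nat S2 * (inverse fd * Q)"
    unfolding L Q_def sum_distrib_left[symmetric] double_sum_swap[where w=w and wv=ww and s=s and t=t and d=d and g=g]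
    by (rule refl)
  have cnt: "(\<Sum>i\<in>{i\<in>{1..d}. ww i = t}. card {x\<in>Sd d. w \<circ> inv x = ww(i := s)})
        = (\<Sum>j\<in>{j\<in>{1..d}. w j = s}. card {y\<in>Sd d. ww \<circ> inv y = w(j := t)})"
    unfolding card_eq_sum by (rule double_sum_swap[where w=w and wv=ww and s=s and t=t and d=d and g="\<lambda>_. 1::nat"])
  have c1: "card {x\<in>Sd d. w \<circ> inv x = ww(i := s)} = S" if i: "i \<in> {i\<in>{1..d}. ww i = t}" for i
  proof -
    have "w \<circ> tr p i = ww(i := s)"
      by (rule orbit_swap) (use w2' wp' i in \<open>auto simp: w_def ww_def\<close>)
    then have "w \<circ> inv (tr p i) = ww(i := s)" using inv_tr by simp
    from coset_card[OF Sd_tr[OF p] this] i show ?thesis unfolding S_def block_def w_def by simp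
  qed
  have c2: "card {y\<in>Sd d. ww \<circ> inv y = w(j := t)} = S2" if j: "j \<in> {j\<in>{1..d}. w j = s}" for j
  proof -
    have "ww \<circ> tr p j = w(j := t)"
      by (rule orbit_swap) (use w2 wp j in \<open>auto simp: w_def ww_def\<close>)
    then have "ww \<circ> inv (tr p j) = w(j := t)" using inv_tr by simp
    from coset_card[OF Sd_tr[OF p] this] j show ?thesis unfolding S2_def block_def ww_def by simp
  qed
  have I2: "{i\<in>{1..d}. ww i = t} = insert p {j\<in>{1..d}. w j = t}"
    using w2 p st wp unfolding w_def ww_def by auto
  have cI2: "card {i\<in>{1..d}. ww i = t} = Kt + 1"
    unfolding I2 using ct wp st unfolding w_def by simp
  have e1: "(\<Sum>i\<in>{i\<in>{1..d}. ww i = t}. card {x\<in>Sd d. w \<circ> inv x = ww(i := s)}) = (\<Sum>i\<in>{i\<in>{1..d}. ww i = t}. S)"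
    by (rule sum.cong) (use c1 in blast)+
  have e2: "(\<Sum>j\<in>{j\<in>{1..d}. w j = s}. card {y\<in>Sd d. ww \<circ> inv y = w(j := t)}) = (\<Sum>j\<in>{j\<in>{1..d}. w j = s}. S2)"
    by (rule sum.cong) (use c2 in blast)+
  have "(Kt + 1) * S = Ks * S2"
    using cnt unfolding e1 e2 sum_constant cI2 cs[unfolded w_def[symmetric]] by simp
  then have rel: "(of_nat (Kt + 1) :: complex) * of_nat S = of_nat Ks * of_nat S2"
    unfolding of_nat_mult[symmetric] by (rule arg_cong[where f = of_nat])
  have Ks0: "(of_nat Ks :: complex) \<noteq> 0" using Ks by simp
  have "(of_nat Ks / of_nat (Kt + 1)) * (fd / of_nat S * (inverse fd * Q)) = fd / of_nat S2 * (inverse fd * Q)"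
  proof -
    have e: "(of_nat Ks / of_nat (Kt + 1)) * (fd / of_nat S) = fd / of_nat S2"
      using rel S0 S20 Ks0 by (simp add: field_simps)
    have "(of_nat Ks / of_nat (Kt + 1)) * (fd / of_nat S * (inverse fd * Q))
       = ((of_nat Ks / of_nat (Kt + 1)) * (fd / of_nat S)) * (inverse fd * Q)" by (rule mult.assoc[symmetric])
    also have "\<dots> = fd / of_nat S2 * (inverse fd * Q)" unfolding e ..
    finally show ?thesis .
  qed
  then show ?thesis unfolding \<psi>_def[symmetric] X_def[symmetric] L' R by (rule sym)
qed

lemma words_wordof: "ps c n = d \<Longrightarrow> wordof d c \<in> words n d"
  unfolding words_def using wordof_in[of c n d] by (auto simp: wordof_ps)

lemma words_upd: "u \<in> words n d \<Longrightarrow> p \<in> {1..d} \<Longrightarrow> b \<in> {1..n} \<Longrightarrow> u(p := b) \<in> words n d"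
  unfolding words_def by auto

lemma fe_id: "dd (Suc a) \<ge> 1 \<Longrightarrow> f_comp a (e_comp a dd) = dd"
  unfolding f_comp_def e_comp_def by (auto simp: fun_eq_iff)

lemma ef_id: "dd a \<ge> 1 \<Longrightarrow> e_comp a (f_comp a dd) = dd"
  unfolding f_comp_def e_comp_def by (auto simp: fun_eq_iff)

theorem mainTheorem4:
  fixes \<rho> :: "(nat \<Rightarrow> nat) \<Rightarrow> complex^'k \<Rightarrow> complex^'k"
    and n d a :: nat and dd :: "nat \<Rightarrow> nat"
  assumes "n \<ge> 1" and "d \<ge> 1"
    and lin: "\<forall>x\<in>Sd d. Vector_Spaces.linear (*s) (*s) (\<rho> x)"
    and rep_id: "\<rho> id = id"
    and rep_mult: "\<forall>x\<in>Sd d. \<forall>y\<in>Sd d. \<rho> (x \<circ> y) = \<rho> x \<circ> \<rho> y"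
    and comp_sum: "(\<Sum>i=1..n. dd i) = d"
    and dominant: "\<forall>i j. 1 \<le> i \<longrightarrow> i \<le> j \<longrightarrow> j \<le> n \<longrightarrow> dd j \<le> dd i"
    and a: "1 \<le> a" "a < n"
  shows "(dd (Suc a) \<ge> 1 \<longrightarrow>
      (\<forall>\<phi> :: complex^'k \<Rightarrow> complex.
         (\<forall>v\<in>invariants \<rho> (block d dd). \<forall>w\<in>invariants \<rho> (block d dd). \<phi> (v + w) = \<phi> v + \<phi> w) \<longrightarrow>
         (\<forall>c. \<forall>v\<in>invariants \<rho> (block d dd). \<phi> (c *s v) = c * \<phi> v) \<longrightarrow>
         (\<forall>u\<in>invariants \<rho> (block d (e_comp a dd)).
            SW_E dual_scale (dual_act \<rho>) n d a dd (\<phi> \<circ> avg \<rho> d dd) u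
            = \<phi> ((of_nat (dd (Suc a)) / of_nat (dd a + 1)) *s
                   SW_F (*s) \<rho> n d a (e_comp a dd) u))))
    \<and> (dd a \<ge> 1 \<longrightarrow>
      (\<forall>\<phi> :: complex^'k \<Rightarrow> complex.
         (\<forall>v\<in>invariants \<rho> (block d dd). \<forall>w\<in>invariants \<rho> (block d dd). \<phi> (v + w) = \<phi> v + \<phi> w) \<longrightarrow>
         (\<forall>c. \<forall>v\<in>invariants \<rho> (block d dd). \<phi> (c *s v) = c * \<phi> v) \<longrightarrow>
         (\<forall>u\<in>invariants \<rho> (block d (f_comp a dd)).
            SW_F dual_scale (dual_act \<rho>) n d a dd (\<phi> \<circ> avg \<rho> d dd) u
            = \<phi> ((of_nat (dd a) / of_nat (dd (Suc a) + 1)) *s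
                   SW_E (*s) \<rho> n d a (f_comp a dd) u))))"
proof -
  have psn: "ps dd n = d" using comp_sum unfolding ps_def .
  have ww: "wordof d dd \<in> words n d" by (rule words_wordof[OF psn])
  obtain a' where a': "a = Suc a'" using a(1) by (cases a) auto
  have cntS: "card {j\<in>{1..d}. wordof d dd j = Suc a} = dd (Suc a)"
    by (rule wordof_count[OF psn]) (use a in simp)
  have cntA: "card {j\<in>{1..d}. wordof d dd j = a} = dd a"
    using wordof_count[OF psn, of a'] a a' by simp
  have an: "a \<in> {1..n}" "Suc a \<in> {1..n}" using a by auto
  show ?thesis
  proof (intro conjI impI allI ballI)
    fix \<phi> :: "complex^'k \<Rightarrow> complex" and u
    assume h: "dd (Suc a) \<ge> 1"
      and padd: "\<forall>v\<in>invariants \<rho> (block d dd). \<forall>w\<in>invariants \<rho> (block d dd). \<phi> (v + w) = \<phi> v + \<phi> w"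
      and psc: "\<forall>c. \<forall>v\<in>invariants \<rho> (block d dd). \<phi> (c *s v) = c * \<phi> v"
    note ec = e_case[where c=dd, OF a psn h]
    have w2w: "wordof d (e_comp a dd) \<in> words n d"
      unfolding ec(3) by (rule words_upd[OF ww ec(1) an(1)])
    have "SWG dual_scale (dual_act \<rho>) n d a (Suc a) dd (e_comp a dd) (\<phi> \<circ> avg \<rho> d dd) u
       = \<phi> ((of_nat (dd (Suc a)) / of_nat (dd a + 1)) *s SWG (*s) \<rho> n d (Suc a) a (e_comp a dd) dd u)"
      by (rule final_generic[OF lin rep_mult ec(3) ec(2) ec(1) _ w2w ww cntS cntA h padd psc]) simp
    then show "SW_E dual_scale (dual_act \<rho>) n d a dd (\<phi> \<circ> avg \<rho> d dd) u
            = \<phi> ((of_nat (dd (Suc a)) / of_nat (dd a + 1)) *s SW_F (*s) \<rho> n d a (e_comp a dd) u)"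
      unfolding SW_E_G SW_F_G fe_id[where dd=dd and a=a, OF h] .
  next
    fix \<phi> :: "complex^'k \<Rightarrow> complex" and u
    assume h: "dd a \<ge> 1"
      and padd: "\<forall>v\<in>invariants \<rho> (block d dd). \<forall>w\<in>invariants \<rho> (block d dd). \<phi> (v + w) = \<phi> v + \<phi> w"
      and psc: "\<forall>c. \<forall>v\<in>invariants \<rho> (block d dd). \<phi> (c *s v) = c * \<phi> v"
    note fc = f_case[where c=dd, OF a psn h]
    have w2w: "wordof d (f_comp a dd) \<in> words n d"
      unfolding fc(3) by (rule words_upd[OF ww fc(1) an(2)])
    have "SWG dual_scale (dual_act \<rho>) n d (Suc a) a dd (f_comp a dd) (\<phi> \<circ> avg \<rho> d dd) u
       = \<phi> ((of_nat (dd a) / of_nat (dd (Suc a) + 1)) *s SWG (*s) \<rho> n d a (Suc a) (f_comp a dd) dd u)"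
      by (rule final_generic[OF lin rep_mult fc(3) fc(2) fc(1) _ w2w ww cntA cntS h padd psc]) simp
    then show "SW_F dual_scale (dual_act \<rho>) n d a dd (\<phi> \<circ> avg \<rho> d dd) u
            = \<phi> ((of_nat (dd a) / of_nat (dd (Suc a) + 1)) *s SW_E (*s) \<rho> n d a (f_comp a dd) u)"
      unfolding SW_E_G SW_F_G ef_id[where dd=dd and a=a, OF h] .
  qed
qed

end
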